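(* Let $X$ be a Minkowski space and let $A=\{\mathbf{x}_1,\dots,\mathbf{x}_{2k+1}\}\subset X$ be a $d$-collinear set of odd size, listed in its natural order. Then $\mathrm{FT}(A)=\{\mathbf{x}_{k+1}\}$.
   Context: A Minkowski space is a finite-dimensional real normed space $(X,\|\cdot\|)$. A metric line is a subset of $X$ isometric to $\mathbb{R}$; a set is $d$-collinear if it is contained in a metric line. A finite $d$-collinear set $\{\mathbf{x}_1,\dots,\mathbf{x}_m\}$ is listed in its natural order if there is an isometry $f$ from it onto a subset of $\mathbb{R}$ with $f(\mathbf{x}_1)<\dots<f(\mathbf{x}_m)$. $\mathrm{FT}(A)$ is the set of minimizers of $\mathbf{x}\mapsto\sum_{\mathbf{a}\in A}\|\mathbf{x}-\mathbf{a}\|$. *)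

theory Defs
  imports "HOL-Analysis.Analysis"
begin

definition finite_dim_normed :: "'a::real_normed_vector itself \<Rightarrow> bool" where
  "finite_dim_normed _ \<longleftrightarrow> (\<exists>B::'a set. finite B \<and> span B = UNIV)"

definition metric_line :: "'a::real_normed_vector set \<Rightarrow> bool" where
  "metric_line L \<longleftrightarrow> (\<exists>f::real \<Rightarrow> 'a. (\<forall>s t. dist (f s) (f t) = \<bar>s - t\<bar>) \<and> range f = L)"

definition d_collinear :: "'a::real_normed_vector set \<Rightarrow> bool" where
  "d_collinear S \<longleftrightarrow> (\<exists>L. metric_line L \<and> S \<subseteq> L)"

definition natural_order :: "(nat \<Rightarrow> 'a::real_normed_vector) \<Rightarrow> nat \<Rightarrow> bool" where
  "natural_order x m \<longleftrightarrow> (\<exists>g::'a \<Rightarrow> real.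
      (\<forall>a\<in>x ` {..<m}. \<forall>b\<in>x ` {..<m}. \<bar>g a - g b\<bar> = dist a b) \<and>
      (\<forall>i j. i < j \<and> j < m \<longrightarrow> g (x i) < g (x j)))"

definition FT :: "'a::real_normed_vector set \<Rightarrow> 'a set" where
  "FT A = {y. \<forall>z. (\<Sum>a\<in>A. norm (y - a)) \<le> (\<Sum>a\<in>A. norm (z - a))}"

end

theory Submission
  imports Defs
begin

lemma pair_split:
  fixes F :: "nat \<Rightarrow> real"
  shows "(\<Sum>i<2*k+1. F i) = F k + (\<Sum>i<k. F i + F (2*k - i))"
proof -
  have U: "{..<2*k+1} = {..<k} \<union> {k} \<union> {k+1..2*k}" by auto
  have "(\<Sum>i<2*k+1. F i) = (\<Sum>i<k. F i) + F k + (\<Sum>i\<in>{k+1..2*k}. F i)"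
    unfolding U by (subst sum.union_disjoint, auto)+
  moreover have "(\<Sum>i\<in>{k+1..2*k}. F i) = (\<Sum>i<k. F (2*k - i))"
    by (rule sum.reindex_bij_witness[where i="\<lambda>i. 2*k - i" and j="\<lambda>i. 2*k - i"]) auto
  ultimately show ?thesis by (simp add: sum.distrib)
qed

theorem corollary3p20:
  fixes x :: "nat \<Rightarrow> 'a::real_normed_vector" and k :: nat
  assumes "finite_dim_normed TYPE('a)"
    and "d_collinear (x ` {..<2*k+1})"
    and "natural_order x (2*k+1)"
  shows "FT (x ` {..<2*k+1}) = {x k}"
proof -
  obtain g where giso: "\<forall>a\<in>x ` {..<2*k+1}. \<forall>b\<in>x ` {..<2*k+1}. \<bar>g a - g b\<bar> = dist a b"
    and gmono: "\<forall>i j. i < j \<and> j < 2*k+1 \<longrightarrow> g (x i) < g (x j)"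
    using assms(3) unfolding natural_order_def by blast
  have inj: "inj_on x {..<2*k+1}"
  proof (rule inj_onI)
    fix i j assume "i \<in> {..<2*k+1}" "j \<in> {..<2*k+1}" "x i = x j"
    then show "i = j" using gmono[rule_format, of i j] gmono[rule_format, of j i]
      by (metis less_irrefl linorder_neqE_nat lessThan_iff)
  qed
  define G where "G z = (\<Sum>a\<in>x ` {..<2*k+1}. norm (z - a))" for z
  have G: "G z = norm (z - x k) + (\<Sum>i<k. norm (z - x i) + norm (z - x (2*k - i)))" for z
    unfolding G_def sum.reindex[OF inj] o_def by (rule pair_split)
  have key: "norm (x k - x i) + norm (x k - x (2*k-i)) \<le> norm (z - x i) + norm (z - x (2*k - i))"
    if "i < k" for i z
  proof -
    have m1: "i \<in> {..<2*k+1}" "k \<in> {..<2*k+1}" "2*k-i \<in> {..<2*k+1}" using that by auto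
    have l1: "g (x i) < g (x k)" using gmono that by auto
    have l2: "g (x k) < g (x (2*k-i))" using gmono[rule_format, of k "2*k-i"] that by linarith
    have xm: "x i \<in> x ` {..<2*k+1}" "x k \<in> x ` {..<2*k+1}" "x (2*k-i) \<in> x ` {..<2*k+1}"
      using m1 by auto
    have d1: "dist (x i) (x k) = g (x k) - g (x i)"
      using giso[rule_format, OF xm(1) xm(2)] l1 by simp
    have d2: "dist (x k) (x (2*k-i)) = g (x (2*k-i)) - g (x k)"
      using giso[rule_format, OF xm(2) xm(3)] l2 by simp
    have d3: "dist (x i) (x (2*k-i)) = g (x (2*k-i)) - g (x i)"
      using giso[rule_format, OF xm(1) xm(3)] l1 l2 by simp
    have "dist (x i) (x (2*k-i)) \<le> dist (x i) z + dist z (x (2*k-i))" by (rule dist_triangle)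
    then show ?thesis using d1 d2 d3 by (simp add: dist_norm norm_minus_commute)
  qed
  have main: "G (x k) + norm (z - x k) \<le> G z" for z
  proof -
    have "G (x k) = (\<Sum>i<k. norm (x k - x i) + norm (x k - x (2*k - i)))" using G by simp
    also have "\<dots> \<le> (\<Sum>i<k. norm (z - x i) + norm (z - x (2*k - i)))"
      by (rule sum_mono) (use key in auto)
    finally show ?thesis using G[of z] by simp
  qed
  show ?thesis
  proof
    show "FT (x ` {..<2*k+1}) \<subseteq> {x k}"
    proof
      fix y assume "y \<in> FT (x ` {..<2*k+1})"
      then have "G y \<le> G (x k)" unfolding FT_def G_def by blast
      with main[of y] have "norm (y - x k) \<le> 0" by linarith
      then show "y \<in> {x k}" by simp
    qed
    show "{x k} \<subseteq> FT (x ` {..<2*k+1})"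
    proof
      fix y assume "y \<in> {x k}"
      have "G (x k) \<le> G z" for z using main[of z] norm_ge_zero[of "z - x k"] by linarith
      then show "y \<in> FT (x ` {..<2*k+1})" using \<open>y \<in> {x k}\<close> unfolding FT_def G_def by simp
    qed
  qed
qed

end
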